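(* Define the relation $\succeq^4$ on $\mathcal{A}$ by $\mathbf{A}\succeq^4\mathbf{B}\iff\lambda(\mathbf{A})\le\lambda(\mathbf{B})$, where for $\mathbf{A}=[a_{ij}]$ of size $n$, $\lambda(\mathbf{A})=\max_{1\le i<j<k\le n}\max\{a_{jk}/a_{ik},\ a_{ik}/a_{jk}\}$. Then $\succeq^4$ is an inconsistency ranking that satisfies PR, IIP, HTE, MON and RED, but does not satisfy SI.
   Context: A pairwise comparison matrix of size $n$ is a matrix $\mathbf{A}=[a_{ij}]\in\mathbb{R}^{n\times n}$ with all entries positive and $a_{ji}=1/a_{ij}$ for all $i,j$. Let $\mathcal{A}$ denote the set of all pairwise comparison matrices of all sizes $n\ge 3$. For $\mathbf{A}\in\mathcal{A}$ of size $n$ and $3\le m\le n$, a submatrix of $\mathbf{A}$ is a matrix $\mathbf{B}=[b_{ij}]$ of size $m$ with $b_{ij}=a_{\sigma(i)\sigma(j)}$ for some strictly increasing map $\sigma:\{1,\dots,m\}\to\{1,\dots,n\}$. A triad is a pairwise comparison matrix of size $3$; a triad of $\mathbf{A}$ is a submatrix of $\mathbf{A}$ of size $3$ (when $n=3$, $\mathbf{A}$ is its own unique triad). A triad $\mathbf{T}$ is written $\mathbf{T}=(t_1;t_2;t_3)$, meaning $t_{12}=t_1$, $t_{13}=t_2$, $t_{23}=t_3$ (the remaining entries are determined by reciprocity); $\mathbf{T}^\top$ denotes its transpose, i.e. the triad $(1/t_1;1/t_2;1/t_3)$. An inconsistency ranking is a complete and transitive binary relation $\succeq$ on $\mathcal{A}$;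 $\mathbf{A}\sim\mathbf{B}$ means $\mathbf{A}\succeq\mathbf{B}$ and $\mathbf{B}\succeq\mathbf{A}$; $\mathbf{A}\preceq\mathbf{B}$ means $\mathbf{B}\succeq\mathbf{A}$. Properties of an inconsistency ranking $\succeq$: (PR) for all $s_2,t_2\ge 1$: $(1;s_2;1)\succeq(1;t_2;1)\iff s_2\le t_2$. (IIP) $\mathbf{T}\sim\mathbf{T}^\top$ for every triad $\mathbf{T}$. (HTE) $(1;t_2;t_3)\sim(1;t_2/t_3;1)$ for all $t_2,t_3>0$. (SI) $(t_1;t_2;t_3)\sim(kt_1;k^2t_2;kt_3)$ for all $t_1,t_2,t_3>0$ and all $k>0$. (MON) $\mathbf{A}\preceq\mathbf{T}$ for every $\mathbf{A}\in\mathcal{A}$ and every triad $\mathbf{T}$ of $\mathbf{A}$. (RED) every $\mathbf{A}\in\mathcal{A}$ has a triad $\mathbf{T}$ with $\mathbf{A}\sim\mathbf{T}$. *)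

theory Defs
  imports Main Complex_Main
begin

text \<open>A square real matrix of size n is represented as a pair (n, a) with entries
  a i j for 0 \<le> i, j < n (0-based indices). To make the representation canonical,
  entries outside the index range are required to be 0.\<close>

type_synonym pcmat = "nat \<times> (nat \<Rightarrow> nat \<Rightarrow> real)"

definition msize :: "pcmat \<Rightarrow> nat" where "msize A = fst A"
definition ent :: "pcmat \<Rightarrow> nat \<Rightarrow> nat \<Rightarrow> real" where "ent A = snd A"

definition PCM :: "pcmat set" where
  "PCM = {(n, a). n \<ge> 3 \<and>
      (\<forall>i<n. \<forall>j<n. a i j > 0 \<and> a j i = 1 / a i j) \<and>
      (\<forall>i j. (n \<le> i \<or> n \<le> j) \<longrightarrow> a i j = 0)}"

definition submat :: "pcmat \<Rightarrow> nat \<Rightarrow> (nat \<Rightarrow> nat) \<Rightarrow> pcmat" where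
  "submat A m \<sigma> = (m, \<lambda>i j. if i < m \<and> j < m then ent A (\<sigma> i) (\<sigma> j) else 0)"

definition is_submatrix :: "pcmat \<Rightarrow> pcmat \<Rightarrow> bool" where
  "is_submatrix B A \<longleftrightarrow> 3 \<le> msize B \<and> msize B \<le> msize A \<and>
     (\<exists>\<sigma>. strict_mono_on {0..<msize B} \<sigma> \<and> \<sigma> ` {0..<msize B} \<subseteq> {0..<msize A}
          \<and> B = submat A (msize B) \<sigma>)"

definition is_triad_of :: "pcmat \<Rightarrow> pcmat \<Rightarrow> bool" where
  "is_triad_of T A \<longleftrightarrow> is_submatrix T A \<and> msize T = 3"

text \<open>The triad (t1; t2; t3): t12 = t1, t13 = t2, t23 = t3 (1-based), reciprocal elsewhere.\<close>
definition triad :: "real \<Rightarrow> real \<Rightarrow> real \<Rightarrow> pcmat" where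
  "triad t1 t2 t3 = (3, \<lambda>i j.
     if i = 0 \<and> j = 0 then 1 else if i = 1 \<and> j = 1 then 1 else if i = 2 \<and> j = 2 then 1
     else if i = 0 \<and> j = 1 then t1 else if i = 1 \<and> j = 0 then 1 / t1
     else if i = 0 \<and> j = 2 then t2 else if i = 2 \<and> j = 0 then 1 / t2
     else if i = 1 \<and> j = 2 then t3 else if i = 2 \<and> j = 1 then 1 / t3
     else 0)"

definition mtranspose :: "pcmat \<Rightarrow> pcmat" where
  "mtranspose A = (msize A, \<lambda>i j. ent A j i)"

definition inconsistency_ranking :: "(pcmat \<Rightarrow> pcmat \<Rightarrow> bool) \<Rightarrow> bool" where
  "inconsistency_ranking R \<longleftrightarrow>
     (\<forall>A\<in>PCM. \<forall>B\<in>PCM. R A B \<or> R B A) \<and>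
     (\<forall>A\<in>PCM. \<forall>B\<in>PCM. \<forall>C\<in>PCM. R A B \<longrightarrow> R B C \<longrightarrow> R A C)"

definition indiff :: "(pcmat \<Rightarrow> pcmat \<Rightarrow> bool) \<Rightarrow> pcmat \<Rightarrow> pcmat \<Rightarrow> bool" where
  "indiff R A B \<longleftrightarrow> R A B \<and> R B A"

definition PR :: "(pcmat \<Rightarrow> pcmat \<Rightarrow> bool) \<Rightarrow> bool" where
  "PR R \<longleftrightarrow> (\<forall>s2 t2. 1 \<le> s2 \<longrightarrow> 1 \<le> t2 \<longrightarrow>
      (R (triad 1 s2 1) (triad 1 t2 1) \<longleftrightarrow> s2 \<le> t2))"

definition IIP :: "(pcmat \<Rightarrow> pcmat \<Rightarrow> bool) \<Rightarrow> bool" where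
  "IIP R \<longleftrightarrow> (\<forall>T\<in>PCM. msize T = 3 \<longrightarrow> indiff R T (mtranspose T))"

definition HTE :: "(pcmat \<Rightarrow> pcmat \<Rightarrow> bool) \<Rightarrow> bool" where
  "HTE R \<longleftrightarrow> (\<forall>t2 t3. 0 < t2 \<longrightarrow> 0 < t3 \<longrightarrow>
      indiff R (triad 1 t2 t3) (triad 1 (t2 / t3) 1))"

definition SI :: "(pcmat \<Rightarrow> pcmat \<Rightarrow> bool) \<Rightarrow> bool" where
  "SI R \<longleftrightarrow> (\<forall>t1 t2 t3 k. 0 < t1 \<longrightarrow> 0 < t2 \<longrightarrow> 0 < t3 \<longrightarrow> 0 < k \<longrightarrow>
      indiff R (triad t1 t2 t3) (triad (k * t1) (k^2 * t2) (k * t3)))"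

text \<open>MON: A \<preceq> T, i.e. T \<succeq> A, for every triad T of A.\<close>
definition MON :: "(pcmat \<Rightarrow> pcmat \<Rightarrow> bool) \<Rightarrow> bool" where
  "MON R \<longleftrightarrow> (\<forall>A\<in>PCM. \<forall>T. is_triad_of T A \<longrightarrow> R T A)"

definition RED :: "(pcmat \<Rightarrow> pcmat \<Rightarrow> bool) \<Rightarrow> bool" where
  "RED R \<longleftrightarrow> (\<forall>A\<in>PCM. \<exists>T. is_triad_of T A \<and> indiff R A T)"

definition lam :: "pcmat \<Rightarrow> real" where
  "lam A = Max {max (ent A j k / ent A i k) (ent A i k / ent A j k) | i j k.
                  i < j \<and> j < k \<and> k < msize A}"

definition rank4 :: "pcmat \<Rightarrow> pcmat \<Rightarrow> bool" where
  "rank4 A B \<longleftrightarrow> A \<in> PCM \<and> B \<in> PCM \<and> lam A \<le> lam B"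

end

theory Submission
  imports Defs
begin

lemma ent_pair[simp]: "ent (n, a) = a" unfolding ent_def by simp
lemma msize_pair[simp]: "msize (n, a) = n" unfolding msize_def by simp

lemma lam3:
  assumes "msize A = 3"
  shows "lam A = max (ent A 1 2 / ent A 0 2) (ent A 0 2 / ent A 1 2)"
proof -
  have "{max (ent A j k / ent A i k) (ent A i k / ent A j k) | i j k.
                  i < j \<and> j < k \<and> k < msize A} =
        {max (ent A 1 2 / ent A 0 2) (ent A 0 2 / ent A 1 2)}"
  proof (rule set_eqI, rule iffI)
    fix x assume "x \<in> {max (ent A j k / ent A i k) (ent A i k / ent A j k) | i j k.
                  i < j \<and> j < k \<and> k < msize A}"
    then obtain i j k where "i < j" "j < k" "k < 3"
      and x: "x = max (ent A j k / ent A i k) (ent A i k / ent A j k)"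
      using assms by auto
    then have "i = 0" "j = 1" "k = 2" by auto
    then show "x \<in> {max (ent A 1 2 / ent A 0 2) (ent A 0 2 / ent A 1 2)}" using x by simp
  next
    fix x assume "x \<in> {max (ent A 1 2 / ent A 0 2) (ent A 0 2 / ent A 1 2)}"
    then show "x \<in> {max (ent A j k / ent A i k) (ent A i k / ent A j k) | i j k.
                  i < j \<and> j < k \<and> k < msize A}"
    proof -
      have "0 < (1::nat)" "1 < (2::nat)" "2 < msize A" using assms by auto
      then show ?thesis using \<open>x \<in> _\<close> by blast
    qed
  qed
  then show ?thesis unfolding lam_def by simp
qed

lemma lam_finite:
  "finite {max (ent A j k / ent A i k) (ent A i k / ent A j k) | i j k.
                  i < j \<and> j < k \<and> k < msize A}"
proof -
  have "{max (ent A j k / ent A i k) (ent A i k / ent A j k) | i j k.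
                  i < j \<and> j < k \<and> k < msize A} \<subseteq>
     (\<lambda>(i,j,k). max (ent A j k / ent A i k) (ent A i k / ent A j k)) `
        ({..<msize A} \<times> {..<msize A} \<times> {..<msize A})"
    by (auto simp: image_def) (metis lessThan_iff mem_Sigma_iff order.strict_trans)
  then show ?thesis by (rule finite_subset) auto
qed

lemma lam_ge:
  assumes "i < j" "j < k" "k < msize A"
  shows "max (ent A j k / ent A i k) (ent A i k / ent A j k) \<le> lam A"
  unfolding lam_def using assms by (intro Max_ge[OF lam_finite]) blast

lemma lam_attained:
  assumes "3 \<le> msize A"
  shows "\<exists>i j k. i < j \<and> j < k \<and> k < msize A \<and>
     lam A = max (ent A j k / ent A i k) (ent A i k / ent A j k)"
proof -
  have ne: "{max (ent A j k / ent A i k) (ent A i k / ent A j k) | i j k.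
                  i < j \<and> j < k \<and> k < msize A} \<noteq> {}"
  proof -
    have "0 < (1::nat)" "1 < (2::nat)" "2 < msize A" using assms by auto
    then show ?thesis by blast
  qed
  from Max_in[OF lam_finite ne] show ?thesis unfolding lam_def by blast
qed

lemma all3: "(\<forall>i<(3::nat). Q i) = (Q 0 \<and> Q 1 \<and> Q 2)"
proof -
  have "\<And>i::nat. i < 3 \<longleftrightarrow> i = 0 \<or> i = 1 \<or> i = 2" by auto
  then show ?thesis by metis
qed

lemma triad_PCM:
  assumes "0 < t1" "0 < t2" "0 < t3"
  shows "triad t1 t2 t3 \<in> PCM"
proof -
  define f where "f = snd (triad t1 t2 t3)"
  have te: "triad t1 t2 t3 = (3, f)" unfolding f_def triad_def by simp
  have 1: "\<forall>i<3. \<forall>j<3. 0 < f i j \<and> f j i = 1 / f i j"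
    unfolding all3 using assms by (simp add: triad_def f_def)
  have 2: "\<forall>i j. (3 \<le> i \<or> 3 \<le> j) \<longrightarrow> f i j = 0"
    by (auto simp: triad_def f_def)
  show ?thesis unfolding te PCM_def using 1 2 by blast
qed

lemma triad_size[simp]: "msize (triad t1 t2 t3) = 3"
  by (simp add: triad_def msize_def)

lemma lam_triad: "lam (triad t1 t2 t3) = max (t3 / t2) (t2 / t3)"
  by (subst lam3) (simp_all add: triad_def ent_def msize_def)

lemma submat_PCM:
  assumes A: "A \<in> PCM" and m: "3 \<le> m" and s: "\<sigma> ` {0..<m} \<subseteq> {0..<msize A}"
  shows "submat A m \<sigma> \<in> PCM"
proof -
  obtain n a where Aeq: "A = (n, a)" by (cases A)
  have ms: "msize A = n" using Aeq by (simp add: msize_def)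
  have s': "\<sigma> i < n" if "i < m" for i
  proof -
    have "\<sigma> i \<in> {0..<msize A}" using s that by (meson atLeastLessThan_iff image_subset_iff zero_le)
    then show ?thesis using ms by simp
  qed
  have P: "\<forall>i<n. \<forall>j<n. a i j > 0 \<and> a j i = 1 / a i j" 
  proof -
    have "(n, a) \<in> PCM" using A Aeq by simp
    then show ?thesis unfolding PCM_def by blast
  qed
  define f where "f = (\<lambda>i j. if i < m \<and> j < m then a (\<sigma> i) (\<sigma> j) else (0::real))"
  have te: "submat A m \<sigma> = (m, f)" unfolding submat_def f_def Aeq ent_pair by (rule refl)
  have 1: "\<forall>i<m. \<forall>j<m. 0 < f i j \<and> f j i = 1 / f i j"
  proof (intro allI impI)
    fix i j assume ij: "i < m" "j < m"
    then have "\<sigma> i < n" "\<sigma> j < n" using s' by auto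
    then have "a (\<sigma> i) (\<sigma> j) > 0 \<and> a (\<sigma> j) (\<sigma> i) = 1 / a (\<sigma> i) (\<sigma> j)"
      using P by blast
    then show "0 < f i j \<and> f j i = 1 / f i j" using ij unfolding f_def by simp
  qed
  have 2: "\<forall>i j. (m \<le> i \<or> m \<le> j) \<longrightarrow> f i j = 0"
    unfolding f_def by auto
  show ?thesis unfolding te PCM_def using 1 2 m by blast
qed

lemma PCM_pos: "A \<in> PCM \<Longrightarrow> i < msize A \<Longrightarrow> j < msize A \<Longrightarrow> ent A i j > 0
   \<and> ent A j i = 1 / ent A i j"
proof (cases A)
  case (Pair n a)
  assume "A \<in> PCM" "i < msize A" "j < msize A"
  then have "(n, a) \<in> PCM" "i < n" "j < n" using Pair by auto
  then have "a i j > 0 \<and> a j i = 1 / a i j" unfolding PCM_def by blast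
  then show ?thesis using Pair by simp
qed

lemma PCM_size: "A \<in> PCM \<Longrightarrow> 3 \<le> msize A"
proof (cases A)
  case (Pair n a)
  assume "A \<in> PCM"
  then have "(n, a) \<in> PCM" using Pair by simp
  then have "n \<ge> 3" unfolding PCM_def by blast
  then show ?thesis using Pair by simp
qed

theorem mainTheorem5:
  shows "inconsistency_ranking rank4 \<and> PR rank4 \<and> IIP rank4 \<and> HTE rank4 \<and>
         MON rank4 \<and> RED rank4 \<and> \<not> SI rank4"
proof (intro conjI)
  show "inconsistency_ranking rank4"
    unfolding inconsistency_ranking_def rank4_def by auto
  show "PR rank4"
  proof -
    have mx: "max (1 / s) (s / 1) = s" if "1 \<le> s" for s :: real
    proof -
      have "1 / s \<le> 1" using that by simp
      then show ?thesis using that by (simp add: max_def, linarith)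
    qed
    show ?thesis unfolding PR_def rank4_def
    proof (intro allI impI)
      fix s2 t2 :: real assume "1 \<le> s2" "1 \<le> t2"
      then show "(triad 1 s2 1 \<in> PCM \<and> triad 1 t2 1 \<in> PCM \<and>
        lam (triad 1 s2 1) \<le> lam (triad 1 t2 1)) = (s2 \<le> t2)"
        using triad_PCM[of 1 s2 1] triad_PCM[of 1 t2 1] mx[of s2] mx[of t2]
        by (simp add: lam_triad)
    qed
  qed
  show "IIP rank4"
    unfolding IIP_def indiff_def
  proof (intro ballI impI)
    fix T assume T: "T \<in> PCM" "msize T = 3"
    obtain n a where Teq: "T = (n, a)" by (cases T)
    have nP: "(n, a) \<in> PCM" using T Teq by simp
    have te: "mtranspose T = (n, \<lambda>i j. a j i)" unfolding Teq mtranspose_def by simp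
    have H1: "3 \<le> n" and H2: "\<forall>i<n. \<forall>j<n. 0 < a i j \<and> a j i = 1 / a i j"
      and H3: "\<forall>i j. n \<le> i \<or> n \<le> j \<longrightarrow> a i j = 0"
      using nP unfolding PCM_def by blast+
    have H2': "\<forall>i<n. \<forall>j<n. 0 < a j i \<and> a i j = 1 / a j i" using H2 by blast
    have H3': "\<forall>i j. n \<le> i \<or> n \<le> j \<longrightarrow> a j i = 0" using H3 by blast
    have tP: "mtranspose T \<in> PCM" unfolding te PCM_def using H1 H2' H3' by blast
    have "lam (mtranspose T) = lam T"
    proof -
      have ms: "msize (mtranspose T) = 3" using T by (simp add: mtranspose_def msize_def)
      have "ent T 2 1 = 1 / ent T 1 2" "ent T 2 0 = 1 / ent T 0 2" "ent T 1 2 > 0" "ent T 0 2 > 0"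
        using PCM_pos[OF T(1), of 1 2] PCM_pos[OF T(1), of 0 2] T(2) by auto
      then show ?thesis using lam3[OF ms] lam3[OF T(2)]
        by (simp add: mtranspose_def ent_def max.commute)
    qed
    then show "rank4 T (mtranspose T) \<and> rank4 (mtranspose T) T"
      using T tP unfolding rank4_def by simp
  qed
  show "HTE rank4"
    unfolding HTE_def indiff_def rank4_def using triad_PCM
    by (auto simp: lam_triad)
  show "MON rank4"
    unfolding MON_def rank4_def
  proof (intro ballI allI impI conjI)
    fix A T assume A: "A \<in> PCM" and T: "is_triad_of T A"
    then obtain \<sigma> where sm: "strict_mono_on {0..<3} \<sigma>" and s: "\<sigma> ` {0..<3} \<subseteq> {0..<msize A}"
      and Teq: "T = submat A 3 \<sigma>"
      unfolding is_triad_of_def is_submatrix_def by auto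
    show "T \<in> PCM" using submat_PCM[OF A _ s] Teq by simp
    have "\<sigma> 0 < \<sigma> 1" "\<sigma> 1 < \<sigma> 2" using sm by (auto simp: strict_mono_on_def)
    moreover have "\<sigma> 2 < msize A"
    proof -
      have "(2::nat) \<in> {0..<3}" by simp
      then have "\<sigma> 2 \<in> {0..<msize A}" using s by blast
      then show ?thesis by simp
    qed
    ultimately have "max (ent A (\<sigma> 1) (\<sigma> 2) / ent A (\<sigma> 0) (\<sigma> 2))
        (ent A (\<sigma> 0) (\<sigma> 2) / ent A (\<sigma> 1) (\<sigma> 2)) \<le> lam A"
      by (rule lam_ge)
    moreover have "lam T = max (ent A (\<sigma> 1) (\<sigma> 2) / ent A (\<sigma> 0) (\<sigma> 2))
        (ent A (\<sigma> 0) (\<sigma> 2) / ent A (\<sigma> 1) (\<sigma> 2))"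
      using Teq lam3[of T] by (simp add: submat_def msize_def ent_def)
    ultimately show "lam T \<le> lam A" by simp
    show "A \<in> PCM" by (rule A)
  qed
  show "RED rank4"
    unfolding RED_def
  proof
    fix A assume A: "A \<in> PCM"
    obtain i j k where ijk: "i < j" "j < k" "k < msize A"
      and L: "lam A = max (ent A j k / ent A i k) (ent A i k / ent A j k)"
      using lam_attained[OF PCM_size[OF A]] by blast
    define \<sigma> where "\<sigma> = (\<lambda>x::nat. if x = 0 then i else if x = 1 then j else k)"
    define T where "T = submat A 3 \<sigma>"
    have sm: "strict_mono_on {0..<3} \<sigma>" using ijk
      unfolding strict_mono_on_def \<sigma>_def by auto
    have s: "\<sigma> ` {0..<3} \<subseteq> {0..<msize A}" using ijk unfolding \<sigma>_def by auto
    have Tm: "msize T = 3" unfolding T_def submat_def msize_def by simp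
    have tri: "is_triad_of T A" unfolding is_triad_of_def is_submatrix_def
      using Tm sm s PCM_size[OF A] T_def by auto
    have TP: "T \<in> PCM" using submat_PCM[OF A _ s] T_def by simp
    have "lam T = lam A" using lam3[OF Tm] L unfolding T_def
      by (simp add: submat_def ent_def \<sigma>_def)
    then show "\<exists>T. is_triad_of T A \<and> indiff rank4 A T"
    proof (intro exI conjI)
      show "is_triad_of T A" by (rule tri)
      show "indiff rank4 A T" using TP A \<open>lam T = lam A\<close> unfolding indiff_def rank4_def by simp
    qed
  qed
  show "\<not> SI rank4"
  proof
    assume "SI rank4"
    then have "indiff rank4 (triad 1 1 1) (triad (2 * 1) (2^2 * 1) (2 * 1))"
      unfolding SI_def by (meson zero_less_one zero_less_numeral)
    then show False unfolding indiff_def rank4_def by (simp add: lam_triad)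
  qed
qed

end
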